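(* For the Steiner tree problem with revenues, budgets and hop constraints (STPRBH), the partial-ordering model (P-STPRBH) is strictly stronger than the assignment model (A-STPRBH): for every STPRBH instance the LP relaxation values satisfy $\nu_{\text{P-STPRBH}}\le\nu_{\text{A-STPRBH}}$, and there exist STPRBH instances for which this inequality is strict.
   Context: STPRBH instance: a complete undirected graph $G=(V,E)$ with edge costs $c:E\to\mathbb{R}_{>0}$, node revenues $\rho:V\to\mathbb{R}_{\ge0}$, a root $r\in V$, a hop limit $H\ge1$ and a budget $B\ge0$. For every ordered pair $(u,v)$ of distinct nodes there is a variable $x_{u,v}$. Common $x$-constraints: (X1) $\sum_{u\neq v}x_{u,v}\le1$ for all $v\in V$; (X2) $\sum_{u\in V\setminus\{v,w\}}x_{u,v}\ge x_{v,w}$ for all $v\in V\setminus\{r\}$, $w\neq v$; (X3) $0\le x_{u,v}\le1$; (X5) $\sum_{uv\in E}c_{uv}(x_{u,v}+x_{v,u})\le B$. $\mathcal{P}^{STPRBH}$: all $(x,l,g)$ (with $l_{v,i},g_{i,v}$ for $v\in V$, $i=0,\dots,H$) satisfying (X1)–(X3),(X5) and $l_{r,0}=g_{0,r}=0$; $l_{v,1}=g_{H,v}=0$ for $v\neq r$; $l_{v,i}\le l_{v,i+1}$ and $g_{i,v}+l_{v,i+1}=1$ for $v\in V$, $i=0,\dots,H-1$; $l_{u,i}+g_{i,v}\ge x_{u,v}$ for $u\neq v$, $i=0,\dots,H$; $0\le l,g\le1$. $\mathcal{A}^{STPRBH}$: all $(x,y)$ (with $y_{v,i}$ for $v\in V$,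 $i=0,\dots,H$) satisfying (X1)–(X3),(X5) and $y_{r,0}=1$; $y_{r,i}=0$ for $i\ge1$; $y_{v,0}=0$ and $\sum_{i=1}^Hy_{v,i}=1$ for $v\neq r$; $y_{u,i}-y_{v,i+1}+x_{u,v}\le1$ for $u\neq v$, $i=0,\dots,H-1$; $y_{u,H}+x_{u,v}\le1$ for $u\neq v$; $0\le y\le1$. (A-STPRBH) and (P-STPRBH) maximize $\rho_r+\sum_{uv\in E}(x_{u,v}\rho_v+x_{v,u}\rho_u)$ over the integral points of $\mathcal{A}^{STPRBH}$ and $\mathcal{P}^{STPRBH}$ respectively. $\nu_M$ is the optimal value of the LP relaxation of ILP $M$. For a maximization problem, model $A$ is stronger than $B$ if $\nu_A\le\nu_B$ on all instances, and strictly stronger if moreover strict inequality holds for some instance. *)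

theory Defs
  imports Main "HOL-Library.Multiset" Complex_Main
begin

text \<open>An STPRBH instance on the complete graph with node set V. Edge costs of the
undirected edge uv are given by a symmetric function c (c u v = c v u), positive on
distinct nodes.\<close>

definition stprbh_instance ::
  "'a set \<Rightarrow> ('a \<Rightarrow> 'a \<Rightarrow> real) \<Rightarrow> ('a \<Rightarrow> real) \<Rightarrow> 'a \<Rightarrow> nat \<Rightarrow> real \<Rightarrow> bool" where
  "stprbh_instance V c \<rho> r H B \<longleftrightarrow>
     finite V \<and> r \<in> V \<and> H \<ge> 1 \<and> B \<ge> 0 \<and>
     (\<forall>u\<in>V. \<forall>v\<in>V. u \<noteq> v \<longrightarrow> c u v = c v u \<and> c u v > 0) \<and>
     (\<forall>v\<in>V. \<rho> v \<ge> 0)"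

definition arcs :: "'a set \<Rightarrow> ('a \<times> 'a) set" where
  "arcs V = {(u, v). u \<in> V \<and> v \<in> V \<and> u \<noteq> v}"

text \<open>Common constraints (X1), (X2), (X3), (X5).
 Sum over undirected edges uv of c_uv (x_uv + x_vu) equals the sum over arcs (u,v)
 of c_uv x_uv.\<close>
definition x_constraints ::
  "'a set \<Rightarrow> ('a \<Rightarrow> 'a \<Rightarrow> real) \<Rightarrow> 'a \<Rightarrow> real \<Rightarrow> ('a \<Rightarrow> 'a \<Rightarrow> real) \<Rightarrow> bool" where
  "x_constraints V c r B x \<longleftrightarrow>
     (\<forall>v\<in>V. (\<Sum>u\<in>V - {v}. x u v) \<le> 1) \<and>
     (\<forall>v\<in>V - {r}. \<forall>w\<in>V - {v}. (\<Sum>u\<in>V - {v, w}. x u v) \<ge> x v w) \<and>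
     (\<forall>(u, v)\<in>arcs V. 0 \<le> x u v \<and> x u v \<le> 1) \<and>
     (\<Sum>(u, v)\<in>arcs V. c u v * x u v) \<le> B"

text \<open>Objective: rho_r + sum over edges uv of (x_uv rho_v + x_vu rho_u)
  = rho_r + sum over arcs (u,v) of x_uv rho_v.\<close>
definition stprbh_obj :: "'a set \<Rightarrow> ('a \<Rightarrow> real) \<Rightarrow> 'a \<Rightarrow> ('a \<Rightarrow> 'a \<Rightarrow> real) \<Rightarrow> real" where
  "stprbh_obj V \<rho> r x = \<rho> r + (\<Sum>(u, v)\<in>arcs V. x u v * \<rho> v)"

definition P_poly ::
  "'a set \<Rightarrow> ('a \<Rightarrow> 'a \<Rightarrow> real) \<Rightarrow> 'a \<Rightarrow> nat \<Rightarrow> real \<Rightarrow>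
   (('a \<Rightarrow> 'a \<Rightarrow> real) \<times> ('a \<Rightarrow> nat \<Rightarrow> real) \<times> (nat \<Rightarrow> 'a \<Rightarrow> real)) set" where
  "P_poly V c r H B = {(x, l, g).
     x_constraints V c r B x \<and>
     l r 0 = 0 \<and> g 0 r = 0 \<and>
     (\<forall>v\<in>V - {r}. l v 1 = 0 \<and> g H v = 0) \<and>
     (\<forall>v\<in>V. \<forall>i<H. l v i \<le> l v (i + 1) \<and> g i v + l v (i + 1) = 1) \<and>
     (\<forall>(u, v)\<in>arcs V. \<forall>i\<le>H. l u i + g i v \<ge> x u v) \<and>
     (\<forall>v\<in>V. \<forall>i\<le>H. 0 \<le> l v i \<and> l v i \<le> 1 \<and> 0 \<le> g i v \<and> g i v \<le> 1)}"

definition A_poly ::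
  "'a set \<Rightarrow> ('a \<Rightarrow> 'a \<Rightarrow> real) \<Rightarrow> 'a \<Rightarrow> nat \<Rightarrow> real \<Rightarrow>
   (('a \<Rightarrow> 'a \<Rightarrow> real) \<times> ('a \<Rightarrow> nat \<Rightarrow> real)) set" where
  "A_poly V c r H B = {(x, y).
     x_constraints V c r B x \<and>
     y r 0 = 1 \<and> (\<forall>i\<in>{1..H}. y r i = 0) \<and>
     (\<forall>v\<in>V - {r}. y v 0 = 0 \<and> (\<Sum>i=1..H. y v i) = 1) \<and>
     (\<forall>(u, v)\<in>arcs V. \<forall>i<H. y u i - y v (i + 1) + x u v \<le> 1) \<and>
     (\<forall>(u, v)\<in>arcs V. y u H + x u v \<le> 1) \<and>
     (\<forall>v\<in>V. \<forall>i\<le>H. 0 \<le> y v i \<and> y v i \<le> 1)}"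

definition nu_P :: "'a set \<Rightarrow> ('a \<Rightarrow> 'a \<Rightarrow> real) \<Rightarrow> ('a \<Rightarrow> real) \<Rightarrow> 'a \<Rightarrow> nat \<Rightarrow> real \<Rightarrow> real" where
  "nu_P V c \<rho> r H B = Sup ((\<lambda>(x, l, g). stprbh_obj V \<rho> r x) ` P_poly V c r H B)"

definition nu_A :: "'a set \<Rightarrow> ('a \<Rightarrow> 'a \<Rightarrow> real) \<Rightarrow> ('a \<Rightarrow> real) \<Rightarrow> 'a \<Rightarrow> nat \<Rightarrow> real \<Rightarrow> real" where
  "nu_A V c \<rho> r H B = Sup ((\<lambda>(x, y). stprbh_obj V \<rho> r x) ` A_poly V c r H B)"

end

theory Submission
  imports Defs
begin

lemma possum:
  fixes a :: "nat \<Rightarrow> real"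
  assumes "finite I" "\<forall>i\<in>I. 0 \<le> a i" "0 \<le> s"
  shows "(\<Sum>i\<in>I. max 0 (a i - s)) \<le> max 0 ((\<Sum>i\<in>I. a i) - s)"
  using assms
proof (induction I rule: finite_induct)
  case empty
  then show ?case by simp
next
  case (insert j F)
  have A: "0 \<le> (\<Sum>i\<in>F. a i)" using insert by (simp add: sum_nonneg)
  have aj: "0 \<le> a j" using insert by simp
  have "(\<Sum>i\<in>insert j F. max 0 (a i - s)) = max 0 (a j - s) + (\<Sum>i\<in>F. max 0 (a i - s))"
    using insert by simp
  also have "\<dots> \<le> max 0 (a j - s) + max 0 ((\<Sum>i\<in>F. a i) - s)"
    using insert by simp
  also have "\<dots> \<le> max 0 (a j + (\<Sum>i\<in>F. a i) - s)"
    using A aj \<open>0 \<le> s\<close> by (simp add: max_def)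
  also have "\<dots> = max 0 ((\<Sum>i\<in>insert j F. a i) - s)"
    using insert by simp
  finally show ?case .
qed

locale cons =
  fixes V :: "'a set" and x :: "'a \<Rightarrow> 'a \<Rightarrow> real" and l :: "'a \<Rightarrow> nat \<Rightarrow> real"
    and r :: 'a and H :: nat
  assumes fin: "finite V" and rV: "r \<in> V" and H1: "1 \<le> H"
    and X1: "\<And>v. v \<in> V \<Longrightarrow> (\<Sum>u\<in>V - {v}. x u v) \<le> 1"
    and x0: "\<And>u v. u \<in> V \<Longrightarrow> v \<in> V \<Longrightarrow> u \<noteq> v \<Longrightarrow> 0 \<le> x u v"
    and x1: "\<And>u v. u \<in> V \<Longrightarrow> v \<in> V \<Longrightarrow> u \<noteq> v \<Longrightarrow> x u v \<le> 1"
    and l1: "\<And>v. v \<in> V \<Longrightarrow> v \<noteq> r \<Longrightarrow> l v 1 = 0"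
    and lb0: "\<And>v i. v \<in> V \<Longrightarrow> i \<le> H \<Longrightarrow> 0 \<le> l v i"
    and lb1: "\<And>v i. v \<in> V \<Longrightarrow> i \<le> H \<Longrightarrow> l v i \<le> 1"
    and xr: "\<And>u. u \<in> V \<Longrightarrow> u \<noteq> r \<Longrightarrow> x u r = 0"
    and Pk: "\<And>u v k. u \<in> V \<Longrightarrow> v \<in> V \<Longrightarrow> u \<noteq> v \<Longrightarrow> k < H \<Longrightarrow>
               x u v \<le> l u k + 1 - l v (Suc k)"
    and PH: "\<And>u v. u \<in> V \<Longrightarrow> v \<in> V \<Longrightarrow> u \<noteq> v \<Longrightarrow> v \<noteq> r \<Longrightarrow> x u v \<le> l u H"
begin

definition U where "U v i = 1 - l v i"
definition cc where "cc k v = 1 - (\<Sum>i\<in>{Suc k..H}. U v i)"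

primrec lev :: "nat \<Rightarrow> ('a \<Rightarrow> real) \<times> ('a \<Rightarrow> real)" where
  "lev 0 = (\<lambda>v. if v = r then 1 else 0, \<lambda>v. 0)"
| "lev (Suc k) = (let yk = fst (lev k); Qk = snd (lev k);
     Qn = (\<lambda>v. max (Qk v + Max (insert 0 ((\<lambda>u. yk u + x u v - 1) ` (V - {v})))) (cc (Suc k) v))
   in (\<lambda>v. if v = r then 0 else Qn v - Qk v, Qn))"

definition yy where "yy k v = fst (lev k) v"
definition QQ where "QQ k v = snd (lev k) v"
definition RR where "RR k v = Max (insert 0 ((\<lambda>u. yy k u + x u v - 1) ` (V - {v})))"

lemma QQ0: "QQ 0 v = 0" by (simp add: QQ_def)
lemma yy0: "yy 0 v = (if v = r then 1 else 0)" by (simp add: yy_def)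
lemma QQS: "QQ (Suc k) v = max (QQ k v + RR k v) (cc (Suc k) v)"
  by (simp add: QQ_def RR_def yy_def Let_def)
lemma yyS: "yy (Suc k) v = (if v = r then 0 else QQ (Suc k) v - QQ k v)"
  by (simp add: QQ_def RR_def yy_def Let_def)

lemma RR_ge0: "0 \<le> RR k v"
  unfolding RR_def by (rule Max_ge) (use fin in auto)

lemma RR_ge: "u \<in> V \<Longrightarrow> u \<noteq> v \<Longrightarrow> yy k u + x u v - 1 \<le> RR k v"
  unfolding RR_def by (rule Max_ge) (use fin in auto)

lemma RR_le: "(\<And>u. u \<in> V \<Longrightarrow> u \<noteq> v \<Longrightarrow> yy k u + x u v - 1 \<le> b) \<Longrightarrow> 0 \<le> b \<Longrightarrow> RR k v \<le> b"
  unfolding RR_def by (rule Max.boundedI) (use fin in auto)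

lemma yy_ge0: "0 \<le> yy k v"
proof (cases k)
  case 0 then show ?thesis by (simp add: yy0)
next
  case (Suc j) then show ?thesis using RR_ge0[of j v] by (simp add: yyS QQS le_max_iff_disj)
qed

lemma yyS_ge_RR: "v \<noteq> r \<Longrightarrow> RR k v \<le> yy (Suc k) v"
  by (simp add: yyS QQS)

lemma U_ge0: "v \<in> V \<Longrightarrow> i \<le> H \<Longrightarrow> 0 \<le> U v i"
  using lb1 by (simp add: U_def)

lemma yy_root: "yy (Suc k) r = 0" by (simp add: yyS)

lemma yy_root': "0 < k \<Longrightarrow> yy k r = 0" by (cases k) (auto simp: yy_root)

lemma RR_le_U:
  assumes k: "k < H" and v: "v \<in> V" "v \<noteq> r"
    and IH: "\<forall>u\<in>V - {r}. 1 \<le> k \<longrightarrow> yy k u \<le> U u k"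
  shows "RR k v \<le> U v (Suc k)"
proof (rule RR_le)
  show "0 \<le> U v (Suc k)" using U_ge0 v k by simp
next
  fix u assume u: "u \<in> V" "u \<noteq> v"
  show "yy k u + x u v - 1 \<le> U v (Suc k)"
  proof (cases "u = r")
    case True
    show ?thesis
    proof (cases k)
      case 0
      then show ?thesis using True x1[OF u(1) v(1) u(2)] l1[OF v] by (simp add: yy0 U_def)
    next
      case (Suc j)
      then show ?thesis using True x1[OF u(1) v(1) u(2)] U_ge0[OF v(1), of "Suc k"] k
        by (simp add: yy_root)
    qed
  next
    case False
    show ?thesis
    proof (cases k)
      case 0
      then show ?thesis using False x1[OF u(1) v(1) u(2)] U_ge0[OF v(1), of "Suc k"] k
        by (simp add: yy0)
    next
      case (Suc j)
      then have "yy k u \<le> U u k" using IH u False by auto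
      moreover have "x u v \<le> l u k + 1 - l v (Suc k)" using Pk[OF u(1) v(1) u(2) k] .
      ultimately show ?thesis by (simp add: U_def)
    qed
  qed
qed

lemma claim1:
  "k \<le> H \<Longrightarrow> \<forall>v\<in>V - {r}. cc k v \<le> QQ k v \<and> (1 \<le> k \<longrightarrow> yy k v \<le> U v k)"
proof (induction k)
  case 0
  show ?case
  proof
    fix v assume v: "v \<in> V - {r}"
    have "U v 1 \<le> (\<Sum>i\<in>{Suc 0..H}. U v i)"
      by (rule member_le_sum) (use H1 U_ge0 v in auto)
    moreover have "U v 1 = 1" using l1 v by (simp add: U_def)
    ultimately show "cc 0 v \<le> QQ 0 v \<and> (1 \<le> (0::nat) \<longrightarrow> yy 0 v \<le> U v 0)"
      by (simp add: cc_def QQ0)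
  qed
next
  case (Suc k)
  then have IH: "\<forall>v\<in>V - {r}. cc k v \<le> QQ k v \<and> (1 \<le> k \<longrightarrow> yy k v \<le> U v k)" by simp
  show ?case
  proof
    fix v assume v: "v \<in> V - {r}"
    have R: "RR k v \<le> U v (Suc k)"
      by (rule RR_le_U) (use Suc.prems v IH in auto)
    have ccs: "cc k v = cc (Suc k) v - U v (Suc k)"
      unfolding cc_def using Suc.prems by (simp add: sum.atLeast_Suc_atMost)
    have "cc k v \<le> QQ k v" using IH v by blast
    then show "cc (Suc k) v \<le> QQ (Suc k) v \<and> (1 \<le> Suc k \<longrightarrow> yy (Suc k) v \<le> U v (Suc k))"
      using R ccs v by (auto simp: QQS yyS)
  qed
qed

lemma tele_lt: "v \<noteq> r \<Longrightarrow> (\<Sum>i<Suc k. yy i v) = QQ k v"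
  by (induction k) (auto simp: yy0 QQ0 yyS)

lemma tele_cl: "v \<noteq> r \<Longrightarrow> (\<Sum>i\<in>{1..k}. yy i v) = QQ k v"
  by (induction k) (auto simp: QQ0 yyS)

lemma root_sum: "(\<Sum>i<Suc k. yy i r) = 1"
  by (induction k) (auto simp: yy0 yyS)

lemma SumR:
  assumes v: "v \<in> V" and S: "\<forall>u\<in>V. (\<Sum>i<n. yy i u) \<le> 1"
  shows "(\<Sum>i<n. RR i v) \<le> 1"
proof -
  have "(\<Sum>i<n. RR i v) \<le> (\<Sum>i<n. \<Sum>u\<in>V - {v}. max 0 (yy i u - (1 - x u v)))"
  proof (rule sum_mono)
    fix i assume "i \<in> {..<n}"
    show "RR i v \<le> (\<Sum>u\<in>V - {v}. max 0 (yy i u - (1 - x u v)))"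
    proof (rule RR_le)
      fix u assume u: "u \<in> V" "u \<noteq> v"
      have "yy i u + x u v - 1 \<le> max 0 (yy i u - (1 - x u v))" by simp
      also have "\<dots> \<le> (\<Sum>u\<in>V - {v}. max 0 (yy i u - (1 - x u v)))"
        by (rule member_le_sum[where f = "\<lambda>u. max 0 (yy i u - (1 - x u v))"]) (use u fin in auto)
      finally show "yy i u + x u v - 1 \<le> (\<Sum>u\<in>V - {v}. max 0 (yy i u - (1 - x u v)))" .
    next
      show "0 \<le> (\<Sum>u\<in>V - {v}. max 0 (yy i u - (1 - x u v)))" by (simp add: sum_nonneg)
    qed
  qed
  also have "\<dots> = (\<Sum>u\<in>V - {v}. \<Sum>i<n. max 0 (yy i u - (1 - x u v)))"
    by (rule sum.swap)
  also have "\<dots> \<le> (\<Sum>u\<in>V - {v}. x u v)"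
  proof (rule sum_mono)
    fix u assume u: "u \<in> V - {v}"
    have "(\<Sum>i<n. max 0 (yy i u - (1 - x u v))) \<le> max 0 ((\<Sum>i<n. yy i u) - (1 - x u v))"
      by (rule possum) (use x1[of u v] u v yy_ge0 in auto)
    also have "\<dots> \<le> x u v" using S u x0[of u v] v by auto
    finally show "(\<Sum>i<n. max 0 (yy i u - (1 - x u v))) \<le> x u v" .
  qed
  also have "\<dots> \<le> 1" using X1 v .
  finally show ?thesis .
qed

lemma claim2:
  "k \<le> H \<Longrightarrow> \<forall>v\<in>V - {r}. (QQ k v \<le> (\<Sum>i<k. RR i v) \<or> QQ k v + (\<Sum>i\<in>{Suc k..H}. U v i) \<le> 1)
      \<and> QQ k v \<le> 1"
proof (induction k)
  case 0
  then show ?case by (simp add: QQ0)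
next
  case (Suc k)
  then have IH: "\<forall>v\<in>V - {r}. (QQ k v \<le> (\<Sum>i<k. RR i v) \<or> QQ k v + (\<Sum>i\<in>{Suc k..H}. U v i) \<le> 1)
      \<and> QQ k v \<le> 1" by simp
  have C1: "\<forall>v\<in>V - {r}. cc k v \<le> QQ k v \<and> (1 \<le> k \<longrightarrow> yy k v \<le> U v k)"
    using claim1 Suc.prems by simp
  have S: "\<forall>u\<in>V. (\<Sum>i<Suc k. yy i u) \<le> 1"
  proof
    fix u assume u: "u \<in> V"
    show "(\<Sum>i<Suc k. yy i u) \<le> 1"
    proof (cases "u = r")
      case True then show ?thesis using root_sum[of k] by simp
    next
      case False then show ?thesis using tele_lt[OF False] IH u by auto
    qed
  qed
  show ?case
  proof
    fix v assume v: "v \<in> V - {r}"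
    have R: "RR k v \<le> U v (Suc k)"
      by (rule RR_le_U) (use Suc.prems v C1 in auto)
    have split: "(\<Sum>i\<in>{Suc k..H}. U v i) = U v (Suc k) + (\<Sum>i\<in>{Suc (Suc k)..H}. U v i)"
      using Suc.prems by (simp add: sum.atLeast_Suc_atMost)
    have J: "QQ (Suc k) v \<le> (\<Sum>i<Suc k. RR i v) \<or> QQ (Suc k) v + (\<Sum>i\<in>{Suc (Suc k)..H}. U v i) \<le> 1"
    proof (cases "QQ k v + RR k v \<le> cc (Suc k) v")
      case True
      then have "QQ (Suc k) v = cc (Suc k) v" by (simp add: QQS)
      then show ?thesis by (simp add: cc_def)
    next
      case False
      then have eq: "QQ (Suc k) v = QQ k v + RR k v" by (simp add: QQS)
      from IH v have "QQ k v \<le> (\<Sum>i<k. RR i v) \<or> QQ k v + (\<Sum>i\<in>{Suc k..H}. U v i) \<le> 1" by blast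
      then show ?thesis
      proof
        assume "QQ k v \<le> (\<Sum>i<k. RR i v)"
        then show ?thesis using eq by simp
      next
        assume "QQ k v + (\<Sum>i\<in>{Suc k..H}. U v i) \<le> 1"
        then show ?thesis using eq split R by simp
      qed
    qed
    have SR: "(\<Sum>i<Suc k. RR i v) \<le> 1" using SumR[of v "Suc k"] v S by simp
    have Un: "0 \<le> (\<Sum>i\<in>{Suc (Suc k)..H}. U v i)"
      by (rule sum_nonneg) (use U_ge0 v in auto)
    show "(QQ (Suc k) v \<le> (\<Sum>i<Suc k. RR i v) \<or> QQ (Suc k) v + (\<Sum>i\<in>{Suc (Suc k)..H}. U v i) \<le> 1)
      \<and> QQ (Suc k) v \<le> 1"
      using J SR Un by auto
  qed
qed

lemma QQH: "v \<in> V \<Longrightarrow> v \<noteq> r \<Longrightarrow> QQ H v = 1"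
  using claim1[of H] claim2[of H] by (force simp: cc_def)


lemma yy_le1: "v \<in> V \<Longrightarrow> i \<le> H \<Longrightarrow> yy i v \<le> 1"
proof (cases i)
  case 0 then show ?thesis by (simp add: yy0)
next
  case (Suc j)
  assume v: "v \<in> V" and i: "i \<le> H"
  show ?thesis
  proof (cases "v = r")
    case True then show ?thesis using Suc by (simp add: yy_root)
  next
    case False
    then have "yy i v \<le> U v i" using claim1[OF i] v Suc by auto
    then show ?thesis using lb0[OF v i] by (simp add: U_def)
  qed
qed

lemma A_mem:
  assumes xc: "x_constraints V c r B x"
  shows "(x, \<lambda>v i. yy i v) \<in> A_poly V c r H B"
proof -
  have c2: "\<forall>i\<in>{1..H}. yy i r = 0"
  proof
    fix i :: nat assume "i \<in> {1..H}"
    then obtain j where "i = Suc j" by (cases i) auto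
    then show "yy i r = 0" by (simp add: yy_root)
  qed
  have c3: "\<forall>v\<in>V - {r}. yy 0 v = 0 \<and> (\<Sum>i=1..H. yy i v) = 1"
    using tele_cl QQH by (auto simp: yy0)
  have c4: "\<forall>(u, v)\<in>arcs V. \<forall>i<H. yy i u - yy (i + 1) v + x u v \<le> 1"
  proof (clarsimp simp: arcs_def)
    fix u v i assume u: "u \<in> V" and v: "v \<in> V" and uv: "u \<noteq> v" and i: "i < H"
    show "yy i u - yy (Suc i) v + x u v \<le> 1"
    proof (cases "v = r")
      case True
      then have "x u v = 0" using xr u uv by simp
      then show ?thesis using True yy_le1[OF u, of i] i by (simp add: yy_root)
    next
      case False
      then show ?thesis using RR_ge[OF u uv, of i] yyS_ge_RR[OF False, of i] by simp
    qed
  qed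
  have c5: "\<forall>(u, v)\<in>arcs V. yy H u + x u v \<le> 1"
  proof (clarsimp simp: arcs_def)
    fix u v assume u: "u \<in> V" and v: "v \<in> V" and uv: "u \<noteq> v"
    show "yy H u + x u v \<le> 1"
    proof (cases "u = r")
      case True
      then show ?thesis using True x1[OF u v uv] yy_root'[of H] H1 by simp
    next
      case False
      then have a: "yy H u \<le> 1 - l u H" using claim1[of H] u H1 by (auto simp: U_def)
      have "x u v \<le> l u H"
      proof (cases "v = r")
        case True then show ?thesis using xr[OF u False] lb0[OF u, of H] by simp
      next
        case False then show ?thesis using PH[OF u v uv] by simp
      qed
      then show ?thesis using a by simp
    qed
  qed
  have c6: "\<forall>v\<in>V. \<forall>i\<le>H. 0 \<le> yy i v \<and> yy i v \<le> 1"
    using yy_ge0 yy_le1 by auto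
  show ?thesis
    unfolding A_poly_def using xc c2 c3 c4 c5 c6 by (simp add: yy0)
qed
end


lemma P_unfold:
  assumes "(x, l, g) \<in> P_poly V c r H B"
  shows "x_constraints V c r B x" "l r 0 = 0" "g 0 r = 0"
    "\<And>v. v \<in> V \<Longrightarrow> v \<noteq> r \<Longrightarrow> l v 1 = 0"
    "\<And>v. v \<in> V \<Longrightarrow> v \<noteq> r \<Longrightarrow> g H v = 0"
    "\<And>v i. v \<in> V \<Longrightarrow> i < H \<Longrightarrow> l v i \<le> l v (Suc i)"
    "\<And>v i. v \<in> V \<Longrightarrow> i < H \<Longrightarrow> g i v + l v (Suc i) = 1"
    "\<And>u v i. u \<in> V \<Longrightarrow> v \<in> V \<Longrightarrow> u \<noteq> v \<Longrightarrow> i \<le> H \<Longrightarrow> x u v \<le> l u i + g i v"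
    "\<And>v i. v \<in> V \<Longrightarrow> i \<le> H \<Longrightarrow> 0 \<le> l v i \<and> l v i \<le> 1 \<and> 0 \<le> g i v \<and> g i v \<le> 1"
  using assms unfolding P_poly_def by (auto simp: arcs_def)

lemma xc_unfold:
  assumes "x_constraints V c r B x"
  shows "\<And>v. v \<in> V \<Longrightarrow> (\<Sum>u\<in>V - {v}. x u v) \<le> 1"
    "\<And>u v. u \<in> V \<Longrightarrow> v \<in> V \<Longrightarrow> u \<noteq> v \<Longrightarrow> 0 \<le> x u v"
    "\<And>u v. u \<in> V \<Longrightarrow> v \<in> V \<Longrightarrow> u \<noteq> v \<Longrightarrow> x u v \<le> 1"
  using assms unfolding x_constraints_def by (auto simp: arcs_def)

lemma P_xr:
  assumes P: "(x, l, g) \<in> P_poly V c r H B" and H: "1 \<le> H" and u: "u \<in> V" "u \<noteq> r" and r: "r \<in> V"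
  shows "x u r = 0"
proof -
  have a: "x u r \<le> l u 0 + g 0 r" using P_unfold(8)[OF P u(1) r] u by simp
  have b: "l u 0 \<le> l u 1" using P_unfold(6)[OF P u(1), of 0] H by simp
  have "l u 1 = 0" using P_unfold(4)[OF P u] .
  moreover have "0 \<le> x u r" using xc_unfold(2)[OF P_unfold(1)[OF P] u(1) r] u by simp
  ultimately show ?thesis using a b P_unfold(3)[OF P] by simp
qed

lemma P_to_A:
  assumes inst: "stprbh_instance V c \<rho> r H B" and P: "(x, l, g) \<in> P_poly V c r H B"
  shows "\<exists>y. (x, y) \<in> A_poly V c r H B"
proof -
  have fin: "finite V" and rV: "r \<in> V" and H1: "1 \<le> H"
    using inst by (auto simp: stprbh_instance_def)
  have xc: "x_constraints V c r B x" using P_unfold(1)[OF P] .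
  interpret cons V x l r H
  proof
    show "finite V" "r \<in> V" "1 \<le> H" by fact+
    show "\<And>v. v \<in> V \<Longrightarrow> (\<Sum>u\<in>V - {v}. x u v) \<le> 1" using xc_unfold(1)[OF xc] .
    show "\<And>u v. u \<in> V \<Longrightarrow> v \<in> V \<Longrightarrow> u \<noteq> v \<Longrightarrow> 0 \<le> x u v" using xc_unfold(2)[OF xc] .
    show "\<And>u v. u \<in> V \<Longrightarrow> v \<in> V \<Longrightarrow> u \<noteq> v \<Longrightarrow> x u v \<le> 1" using xc_unfold(3)[OF xc] .
    show "\<And>v. v \<in> V \<Longrightarrow> v \<noteq> r \<Longrightarrow> l v 1 = 0" using P_unfold(4)[OF P] .
    show "\<And>v i. v \<in> V \<Longrightarrow> i \<le> H \<Longrightarrow> 0 \<le> l v i" using P_unfold(9)[OF P] by blast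
    show "\<And>v i. v \<in> V \<Longrightarrow> i \<le> H \<Longrightarrow> l v i \<le> 1" using P_unfold(9)[OF P] by blast
    show "\<And>u. u \<in> V \<Longrightarrow> u \<noteq> r \<Longrightarrow> x u r = 0" using P_xr[OF P H1 _ _ rV] by blast
    show "\<And>u v k. u \<in> V \<Longrightarrow> v \<in> V \<Longrightarrow> u \<noteq> v \<Longrightarrow> k < H \<Longrightarrow> x u v \<le> l u k + 1 - l v (Suc k)"
    proof -
      fix u v k assume a: "u \<in> V" "v \<in> V" "u \<noteq> v" "k < H"
      have "x u v \<le> l u k + g k v" using P_unfold(8)[OF P a(1-3), of k] a by simp
      moreover have "g k v + l v (Suc k) = 1" using P_unfold(7)[OF P a(2) a(4)] .
      ultimately show "x u v \<le> l u k + 1 - l v (Suc k)" by simp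
    qed
    show "\<And>u v. u \<in> V \<Longrightarrow> v \<in> V \<Longrightarrow> u \<noteq> v \<Longrightarrow> v \<noteq> r \<Longrightarrow> x u v \<le> l u H"
    proof -
      fix u v assume a: "u \<in> V" "v \<in> V" "u \<noteq> v" "v \<noteq> r"
      have "x u v \<le> l u H + g H v" using P_unfold(8)[OF P a(1-3), of H] by simp
      then show "x u v \<le> l u H" using P_unfold(5)[OF P a(2) a(4)] by simp
    qed
  qed
  show ?thesis using A_mem[OF xc] by blast
qed


lemma P_nonempty:
  assumes inst: "stprbh_instance V c \<rho> r H B"
  shows "((\<lambda>u v. 0), (\<lambda>v i. if v = r then (if i = 0 then 0 else 1) else (if i \<le> 1 then 0 else 1)),
          (\<lambda>i v. 1 - (if v = r then (if Suc i = 0 then 0 else 1) else (if Suc i \<le> 1 then 0 else 1))))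
         \<in> P_poly V c r H B"
proof -
  have B: "0 \<le> B" and H1: "1 \<le> H" using inst by (auto simp: stprbh_instance_def)
  have xc: "x_constraints V c r B (\<lambda>u v. 0)"
    unfolding x_constraints_def using B by auto
  show ?thesis unfolding P_poly_def using xc H1 by auto
qed

lemma A_bdd:
  assumes inst: "stprbh_instance V c \<rho> r H B"
  shows "bdd_above ((\<lambda>(x, y). stprbh_obj V \<rho> r x) ` A_poly V c r H B)"
proof (rule bdd_aboveI)
  fix t assume "t \<in> (\<lambda>(x, y). stprbh_obj V \<rho> r x) ` A_poly V c r H B"
  then obtain x y where A: "(x, y) \<in> A_poly V c r H B" and t: "t = stprbh_obj V \<rho> r x" by auto
  have xc: "x_constraints V c r B x" using A unfolding A_poly_def by simp
  have "(\<Sum>(u, v)\<in>arcs V. x u v * \<rho> v) \<le> (\<Sum>(u, v)\<in>arcs V. \<rho> v)"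
  proof (rule sum_mono)
    fix p assume p: "p \<in> arcs V"
    obtain u v where puv: "p = (u, v)" by (cases p)
    have uv: "u \<in> V" "v \<in> V" "u \<noteq> v" using p puv by (auto simp: arcs_def)
    have "x u v \<le> 1" using xc_unfold(3)[OF xc uv] .
    moreover have "0 \<le> \<rho> v" using inst uv by (auto simp: stprbh_instance_def)
    ultimately have "x u v * \<rho> v \<le> 1 * \<rho> v" by (rule mult_right_mono)
    then show "(case p of (u, v) \<Rightarrow> x u v * \<rho> v) \<le> (case p of (u, v) \<Rightarrow> \<rho> v)" using puv by simp
  qed
  then show "t \<le> \<rho> r + (\<Sum>(u, v)\<in>arcs V. \<rho> v)" using t by (simp add: stprbh_obj_def)
qed

lemma part1:
  assumes inst: "stprbh_instance V c \<rho> r H B"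
  shows "nu_P V c \<rho> r H B \<le> nu_A V c \<rho> r H B"
  unfolding nu_P_def nu_A_def
proof (rule cSup_subset_mono)
  show "(\<lambda>(x, l, g). stprbh_obj V \<rho> r x) ` P_poly V c r H B \<noteq> {}"
    using P_nonempty[OF inst] by blast
  show "bdd_above ((\<lambda>(x, y). stprbh_obj V \<rho> r x) ` A_poly V c r H B)" using A_bdd[OF inst] .
  show "(\<lambda>(x, l, g). stprbh_obj V \<rho> r x) ` P_poly V c r H B
        \<subseteq> (\<lambda>(x, y). stprbh_obj V \<rho> r x) ` A_poly V c r H B"
  proof
    fix t assume "t \<in> (\<lambda>(x, l, g). stprbh_obj V \<rho> r x) ` P_poly V c r H B"
    then obtain x l g where P: "(x, l, g) \<in> P_poly V c r H B" and t: "t = stprbh_obj V \<rho> r x"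
      by auto
    obtain y where "(x, y) \<in> A_poly V c r H B" using P_to_A[OF inst P] by blast
    then show "t \<in> (\<lambda>(x, y). stprbh_obj V \<rho> r x) ` A_poly V c r H B"
      using t by (auto intro: image_eqI[where x = "(x, y)"])
  qed
qed

definition cx :: "nat \<Rightarrow> nat \<Rightarrow> real" where
  "cx u v = (if u = 0 \<and> v = 2 then 1 else if (u = 2 \<and> v = 1) \<or> (u = 1 \<and> v = 0) then 1/2 else 0)"
definition cy :: "nat \<Rightarrow> nat \<Rightarrow> real" where
  "cy v i = (if v = 0 then (if i = 0 then 1 else 0)
             else if v = 1 then (if i = 0 then 0 else 1/2)
             else (if i = 1 then 1 else 0))"

lemma arcs3: "arcs {0, 1, 2::nat} = {(0,1),(0,2),(1,0),(1,2),(2,0),(2,1)}"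
  by (auto simp: arcs_def)

lemma inst3: "stprbh_instance {0, 1, 2::nat} (\<lambda>u v. 1) (\<lambda>v. if v = 0 then 1 else 0) 0 2 2"
  by (simp add: stprbh_instance_def)

lemma ex_A: "(cx, cy) \<in> A_poly {0, 1, 2::nat} (\<lambda>u v. 1) 0 2 2"
proof -
  have e1: "{1..2::nat} = {1, 2}" by auto
  have e2: "\<And>P. (\<forall>i<(2::nat). P i) \<longleftrightarrow> P 0 \<and> P 1"
    by (auto simp: numeral_2_eq_2 less_Suc_eq)
  have e3: "\<And>P. (\<forall>i\<le>(2::nat). P i) \<longleftrightarrow> P 0 \<and> P 1 \<and> P 2"
    by (auto simp: numeral_2_eq_2 le_Suc_eq)
  show ?thesis
    unfolding A_poly_def x_constraints_def arcs3
    by (simp add: e1 e2 e3 cx_def cy_def insert_Diff_if)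
qed

lemma part2:
  "nu_P {0, 1, 2::nat} (\<lambda>u v. 1) (\<lambda>v. if v = 0 then 1 else 0) 0 2 2
   < nu_A {0, 1, 2::nat} (\<lambda>u v. 1) (\<lambda>v. if v = 0 then 1 else 0) 0 2 2"
proof -
  let ?V = "{0, 1, 2::nat}" and ?c = "\<lambda>u v. 1::real" and ?\<rho> = "\<lambda>v::nat. if v = 0 then 1 else (0::real)"
  have Pimg: "(\<lambda>(x, l, g). stprbh_obj ?V ?\<rho> 0 x) ` P_poly ?V ?c 0 2 2 = {1}"
  proof
    show "(\<lambda>(x, l, g). stprbh_obj ?V ?\<rho> 0 x) ` P_poly ?V ?c 0 2 2 \<subseteq> {1}"
    proof
      fix t assume "t \<in> (\<lambda>(x, l, g). stprbh_obj ?V ?\<rho> 0 x) ` P_poly ?V ?c 0 2 2"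
      then obtain x l g where P: "(x, l, g) \<in> P_poly ?V ?c 0 2 2" and t: "t = stprbh_obj ?V ?\<rho> 0 x"
        by auto
      have "(\<Sum>(u, v)\<in>arcs ?V. x u v * ?\<rho> v) = 0"
      proof (rule sum.neutral, clarify)
        fix u v assume a: "(u, v) \<in> arcs ?V"
        then have uv: "u \<in> ?V" "v \<in> ?V" "u \<noteq> v" by (auto simp: arcs_def)
        show "x u v * ?\<rho> v = 0"
        proof (cases "v = 0")
          case True
          then have "x u 0 = 0" using P_xr[OF P _ uv(1)] uv by simp
          then show ?thesis using True by simp
        qed simp
      qed
      then show "t \<in> {1}" using t by (simp add: stprbh_obj_def)
    qed
    show "{1} \<subseteq> (\<lambda>(x, l, g). stprbh_obj ?V ?\<rho> 0 x) ` P_poly ?V ?c 0 2 2"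
    proof -
      obtain p where p: "p \<in> P_poly ?V ?c 0 2 2" using P_nonempty[OF inst3] by blast
      obtain x l g where pe: "p = (x, l, g)" by (cases p)
      have P: "(x, l, g) \<in> P_poly ?V ?c 0 2 2" using p pe by simp
      have "(\<Sum>(u, v)\<in>arcs ?V. x u v * ?\<rho> v) = 0"
      proof (rule sum.neutral, clarify)
        fix u v assume a: "(u, v) \<in> arcs ?V"
        then have uv: "u \<in> ?V" "v \<in> ?V" "u \<noteq> v" by (auto simp: arcs_def)
        show "x u v * ?\<rho> v = 0"
        proof (cases "v = 0")
          case True
          then have "x u 0 = 0" using P_xr[OF P _ uv(1)] uv by simp
          then show ?thesis using True by simp
        qed simp
      qed
      then have "stprbh_obj ?V ?\<rho> 0 x = 1" by (simp add: stprbh_obj_def)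
      then show ?thesis using P by (force intro: image_eqI[where x = "(x, l, g)"])
    qed
  qed
  have "nu_P ?V ?c ?\<rho> 0 2 2 = 1" unfolding nu_P_def Pimg by simp
  moreover have "3/2 \<le> nu_A ?V ?c ?\<rho> 0 2 2"
  proof -
    have o: "stprbh_obj ?V ?\<rho> 0 cx = 3/2"
      unfolding stprbh_obj_def arcs3 by (simp add: cx_def)
    have "stprbh_obj ?V ?\<rho> 0 cx \<in> (\<lambda>(x, y). stprbh_obj ?V ?\<rho> 0 x) ` A_poly ?V ?c 0 2 2"
      using ex_A by (force intro: image_eqI[where x = "(cx, cy)"])
    then show ?thesis unfolding nu_A_def using o cSup_upper[OF _ A_bdd[OF inst3]] by metis
  qed
  ultimately show ?thesis by simp
qed

theorem theorem5:
  shows "(\<forall>(V :: 'a set) c \<rho> r H B. stprbh_instance V c \<rho> r H B \<longrightarrow>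
            nu_P V c \<rho> r H B \<le> nu_A V c \<rho> r H B) \<and>
         (\<exists>(V :: nat set) c \<rho> r H B. stprbh_instance V c \<rho> r H B \<and>
            nu_P V c \<rho> r H B < nu_A V c \<rho> r H B)"
  using part1 part2 inst3 by blast

end
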